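(* Let $T$ be a countable tree with root $o$, and let $Q$ be a stochastic matrix on $T$ with $q(x,y)>0$ iff $x=y^-$. Let $\lambda\in\mathbb{C}\setminus\{0\}$ and let $f$ be a $\lambda$-polyharmonic function of order $n\ge1$ for $Q$. Then $$f(x)=\sum_{k=0}^{n-1}|x|^k\,h_k(x),\qquad x\in T,$$ where $h_0,\dots,h_{n-1}$ are $\lambda$-harmonic functions for $Q$, uniquely determined by $f$.
   Context: $|x|=d(o,x)$. $x^-$ is the neighbour of $x\ne o$ closer to $o$. $Qf(x)=\sum_{y:\,y^-=x}q(x,y)f(y)$, required to converge absolutely. $h$ is $\lambda$-harmonic for $Q$ if $Qh=\lambda h$. $f$ is $\lambda$-polyharmonic of order $n$ for $Q$ if $(\lambda I-Q)^nf=0$, where all successive applications of $Q$ are well defined. *)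

theory Defs
  imports "HOL-Analysis.Analysis"
begin

text \<open>A rooted tree on the vertex set UNIV of a countable type: root rt, and
  par x is the neighbour x^- of x (x \<noteq> rt) closer to the root.\<close>

definition rooted_tree :: "('a \<Rightarrow> 'a) \<Rightarrow> 'a \<Rightarrow> bool" where
  "rooted_tree par rt \<longleftrightarrow> (\<forall>x. \<exists>m. (par ^^ m) x = rt)"

definition depth :: "('a \<Rightarrow> 'a) \<Rightarrow> 'a \<Rightarrow> 'a \<Rightarrow> nat" where
  "depth par rt x = (LEAST m. (par ^^ m) x = rt)"

definition children :: "('a \<Rightarrow> 'a) \<Rightarrow> 'a \<Rightarrow> 'a \<Rightarrow> 'a set" where
  "children par rt x = {y. y \<noteq> rt \<and> par y = x}"

definition forward_stochastic :: "('a \<Rightarrow> 'a) \<Rightarrow> 'a \<Rightarrow> ('a \<Rightarrow> 'a \<Rightarrow> real) \<Rightarrow> bool" where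
  "forward_stochastic par rt q \<longleftrightarrow>
     (\<forall>x y. q x y \<ge> 0) \<and> (\<forall>x. (q x has_sum 1) UNIV) \<and>
     (\<forall>x y. q x y > 0 \<longleftrightarrow> (y \<noteq> rt \<and> par y = x))"

definition Q_defined :: "('a \<Rightarrow> 'a) \<Rightarrow> 'a \<Rightarrow> ('a \<Rightarrow> 'a \<Rightarrow> real) \<Rightarrow> ('a \<Rightarrow> complex) \<Rightarrow> bool" where
  "Q_defined par rt q f \<longleftrightarrow>
     (\<forall>x. (\<lambda>y. norm (complex_of_real (q x y) * f y)) summable_on children par rt x)"

definition Qop :: "('a \<Rightarrow> 'a) \<Rightarrow> 'a \<Rightarrow> ('a \<Rightarrow> 'a \<Rightarrow> real) \<Rightarrow> ('a \<Rightarrow> complex) \<Rightarrow> 'a \<Rightarrow> complex" where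
  "Qop par rt q f x = (\<Sum>\<^sub>\<infinity>y\<in>children par rt x. complex_of_real (q x y) * f y)"

definition lambda_harmonic ::
  "('a \<Rightarrow> 'a) \<Rightarrow> 'a \<Rightarrow> ('a \<Rightarrow> 'a \<Rightarrow> real) \<Rightarrow> complex \<Rightarrow> ('a \<Rightarrow> complex) \<Rightarrow> bool" where
  "lambda_harmonic par rt q lam h \<longleftrightarrow>
     Q_defined par rt q h \<and> (\<forall>x. Qop par rt q h x = lam * h x)"

definition Lop :: "('a \<Rightarrow> 'a) \<Rightarrow> 'a \<Rightarrow> ('a \<Rightarrow> 'a \<Rightarrow> real) \<Rightarrow> complex \<Rightarrow> ('a \<Rightarrow> complex) \<Rightarrow> 'a \<Rightarrow> complex" where
  "Lop par rt q lam f x = lam * f x - Qop par rt q f x"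

definition lambda_polyharmonic ::
  "('a \<Rightarrow> 'a) \<Rightarrow> 'a \<Rightarrow> ('a \<Rightarrow> 'a \<Rightarrow> real) \<Rightarrow> complex \<Rightarrow> nat \<Rightarrow> ('a \<Rightarrow> complex) \<Rightarrow> bool" where
  "lambda_polyharmonic par rt q lam n f \<longleftrightarrow>
     (\<forall>k<n. Q_defined par rt q ((Lop par rt q lam ^^ k) f)) \<and>
     (\<forall>x. (Lop par rt q lam ^^ n) f x = 0)"

end

theory Submission
  imports Defs "HOL-Computational_Algebra.Polynomial" "HOL-Analysis.Analysis"
begin


lemma nat_choose_rec: "Suc k * (m choose Suc k) = (m - k) * (m choose k)"
  by (metis binomial_absorb_comp binomial_absorption)

fun bp :: "nat \<Rightarrow> complex poly" where
  "bp 0 = 1"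
| "bp (Suc k) = smult (1 / of_nat (Suc k)) (bp k * [:- of_nat k, 1:])"

lemma bp_degree: "degree (bp k) \<le> k"
proof (induction k)
  case 0 then show ?case by simp
next
  case (Suc k)
  have "degree (bp k * [:- of_nat k, 1:]) \<le> degree (bp k) + degree [:- (of_nat k::complex), 1:]"
    by (rule degree_mult_le)
  also have "\<dots> \<le> Suc k" using Suc by simp
  finally show ?case by simp
qed

lemma bp_poly: "poly (bp k) (of_nat m) = of_nat (m choose k)"
proof (induction k)
  case 0 then show ?case by simp
next
  case (Suc k)
  have e: "of_nat (Suc k) * (of_nat (m choose Suc k) :: complex) = (of_nat m - of_nat k) * of_nat (m choose k)"
  proof (cases "k \<le> m")
    case True
    have "of_nat (Suc k * (m choose Suc k)) = (of_nat ((m - k) * (m choose k)) :: complex)"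
      by (simp only: nat_choose_rec)
    then show ?thesis using True by (simp add: of_nat_diff algebra_simps)
  next
    case False
    then show ?thesis by (simp add: binomial_eq_0)
  qed
  have "poly (bp (Suc k)) (of_nat m) = (of_nat m - of_nat k) * of_nat (m choose k) / of_nat (Suc k)"
    using Suc by (simp add: right_diff_distrib mult.commute diff_divide_distrib)
  also have "\<dots> = of_nat (m choose Suc k)" using e
    by (simp add: field_simps del: of_nat_Suc)
  finally show ?case .
qed

lemma poly_sum_lt:
  fixes p :: "complex poly"
  assumes "degree p < n"
  shows "poly p x = (\<Sum>i<n. coeff p i * x ^ i)"
proof -
  have "poly p x = (\<Sum>i\<le>degree p. coeff p i * x ^ i)" by (rule poly_altdef)
  also have "\<dots> = (\<Sum>i<n. coeff p i * x ^ i)"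
    by (rule sum.mono_neutral_left) (use assms in \<open>auto simp: coeff_eq_0\<close>)
  finally show ?thesis .
qed

lemma choose_poly:
  assumes "k < n"
  shows "(of_nat (m choose k) :: complex) = (\<Sum>i<n. coeff (bp k) i * of_nat m ^ i)"
  using bp_poly[of k m] poly_sum_lt[of "bp k" n] bp_degree[of k] assms by simp



lemma depth_child:
  assumes rt: "rooted_tree par rt" and y: "y \<in> children par rt x"
  shows "depth par rt y = Suc (depth par rt x)"
proof -
  have yn: "y \<noteq> rt" and py: "par y = x" using y by (auto simp: children_def)
  have ex: "\<exists>m. (par ^^ m) x = rt" using rt by (auto simp: rooted_tree_def)
  let ?d = "depth par rt x"
  have dx: "(par ^^ ?d) x = rt" unfolding depth_def using ex by (rule LeastI_ex)
  have dmin: "\<And>m. (par ^^ m) x = rt \<Longrightarrow> ?d \<le> m" unfolding depth_def by (rule Least_le)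
  show ?thesis unfolding depth_def[of par rt y]
  proof (rule Least_equality)
    show "(par ^^ Suc ?d) y = rt" using dx py by (simp add: funpow_Suc_right del: funpow.simps)
  next
    fix m assume m: "(par ^^ m) y = rt"
    then obtain m' where mm: "m = Suc m'" using yn by (cases m) auto
    then have "(par ^^ m') x = rt" using m py by (simp add: funpow_Suc_right del: funpow.simps)
    then show "Suc ?d \<le> m" using dmin mm by auto
  qed
qed

lemma Q_scale:
  assumes rt: "rooted_tree par rt" and g: "Q_defined par rt q g"
  shows "Q_defined par rt q (\<lambda>y. \<phi> (depth par rt y) * g y)"
    and "Qop par rt q (\<lambda>y. \<phi> (depth par rt y) * g y) x = \<phi> (Suc (depth par rt x)) * Qop par rt q g x"
proof -
  have eq: "\<And>x y. y \<in> children par rt x \<Longrightarrow> complex_of_real (q x y) * (\<phi> (depth par rt y) * g y)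
      = \<phi> (Suc (depth par rt x)) * (complex_of_real (q x y) * g y)"
    using depth_child[OF rt] by (simp add: algebra_simps)
  show "Q_defined par rt q (\<lambda>y. \<phi> (depth par rt y) * g y)"
    unfolding Q_defined_def
  proof
    fix x
    have "(\<lambda>y. norm (\<phi> (Suc (depth par rt x))) * norm (complex_of_real (q x y) * g y)) summable_on children par rt x"
      using g unfolding Q_defined_def by (simp add: summable_on_cmult_right)
    then show "(\<lambda>y. norm (complex_of_real (q x y) * (\<phi> (depth par rt y) * g y))) summable_on children par rt x"
    proof (rule summable_on_cong[THEN iffD1, rotated])
      fix y assume "y \<in> children par rt x"
      then show "norm (\<phi> (Suc (depth par rt x))) * norm (complex_of_real (q x y) * g y) = norm (complex_of_real (q x y) * (\<phi> (depth par rt y) * g y))"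
        using eq[of y x] by (simp only: norm_mult)
    qed
  qed
  show "Qop par rt q (\<lambda>y. \<phi> (depth par rt y) * g y) x = \<phi> (Suc (depth par rt x)) * Qop par rt q g x"
    unfolding Qop_def
    by (simp add: infsum_cong[OF eq] infsum_cmult_right')
qed

lemma Q_add:
  assumes a: "Q_defined par rt q a" and b: "Q_defined par rt q b"
  shows "Q_defined par rt q (\<lambda>y. a y + b y)"
    and "Qop par rt q (\<lambda>y. a y + b y) x = Qop par rt q a x + Qop par rt q b x"
proof -
  show "Q_defined par rt q (\<lambda>y. a y + b y)"
    unfolding Q_defined_def
  proof
    fix x
    have "(\<lambda>y. norm (complex_of_real (q x y) * a y) + norm (complex_of_real (q x y) * b y)) summable_on children par rt x"
      using a b unfolding Q_defined_def by (simp add: summable_on_add)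
    then show "(\<lambda>y. norm (complex_of_real (q x y) * (a y + b y))) summable_on children par rt x"
    proof (rule summable_on_comparison_test)
      fix y
      show "norm (complex_of_real (q x y) * (a y + b y)) \<le> norm (complex_of_real (q x y) * a y) + norm (complex_of_real (q x y) * b y)"
        unfolding distrib_left by (rule norm_triangle_ineq)
      show "0 \<le> norm (complex_of_real (q x y) * (a y + b y))" by (rule norm_ge_zero)
    qed
  qed
  have sa: "(\<lambda>y. complex_of_real (q x y) * a y) summable_on children par rt x"
    by (rule abs_summable_summable) (use a in \<open>simp add: Q_defined_def\<close>)
  have sb: "(\<lambda>y. complex_of_real (q x y) * b y) summable_on children par rt x"
    by (rule abs_summable_summable) (use b in \<open>simp add: Q_defined_def\<close>)
  show "Qop par rt q (\<lambda>y. a y + b y) x = Qop par rt q a x + Qop par rt q b x"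
    unfolding Qop_def using infsum_add[OF sa sb] by (simp add: distrib_left)
qed

lemma Q_zero: "Q_defined par rt q (\<lambda>y. 0)" "Qop par rt q (\<lambda>y. 0) x = 0"
  by (auto simp: Q_defined_def Qop_def)

lemma Q_sum:
  assumes "finite I" and "\<And>i. i \<in> I \<Longrightarrow> Q_defined par rt q (g i)"
  shows "Q_defined par rt q (\<lambda>y. \<Sum>i\<in>I. g i y) \<and>
         (\<forall>x. Qop par rt q (\<lambda>y. \<Sum>i\<in>I. g i y) x = (\<Sum>i\<in>I. Qop par rt q (g i) x))"
  using assms
proof (induction I rule: finite_induct)
  case empty then show ?case by (auto simp: Q_defined_def Qop_def)
next
  case (insert i I)
  then have h1: "Q_defined par rt q (g i)" and h2: "Q_defined par rt q (\<lambda>y. \<Sum>i\<in>I. g i y)"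
    and h3: "\<forall>x. Qop par rt q (\<lambda>y. \<Sum>i\<in>I. g i y) x = (\<Sum>i\<in>I. Qop par rt q (g i) x)" by auto
  show ?case using Q_add[OF h1 h2] h3 insert.hyps by simp
qed

lemma Q_diff:
  assumes a: "Q_defined par rt q a" and b: "Q_defined par rt q b" and rt: "rooted_tree par rt"
  shows "Q_defined par rt q (\<lambda>y. a y - b y)"
    and "Qop par rt q (\<lambda>y. a y - b y) x = Qop par rt q a x - Qop par rt q b x"
proof -
  have b': "Q_defined par rt q (\<lambda>y. (\<lambda>_. -1) (depth par rt y) * b y)" by (rule Q_scale[OF rt b])
  have e: "(\<lambda>y. a y - b y) = (\<lambda>y. a y + (\<lambda>_. -1) (depth par rt y) * b y)" by simp
  show "Q_defined par rt q (\<lambda>y. a y - b y)" unfolding e by (rule Q_add[OF a b'])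
  show "Qop par rt q (\<lambda>y. a y - b y) x = Qop par rt q a x - Qop par rt q b x"
    using Q_add(2)[OF a b', of x] Q_scale(2)[OF rt b, of "\<lambda>_. -1" x] by simp
qed



lemma harm_scale:
  assumes rt: "rooted_tree par rt" and h: "lambda_harmonic par rt q lam h"
  shows "lambda_harmonic par rt q lam (\<lambda>x. c * h x)"
proof -
  have d: "Q_defined par rt q h" and e: "\<And>x. Qop par rt q h x = lam * h x"
    using h by (auto simp: lambda_harmonic_def)
  have "Q_defined par rt q (\<lambda>y. (\<lambda>_. c) (depth par rt y) * h y)" by (rule Q_scale(1)[OF rt d])
  moreover have "\<And>x. Qop par rt q (\<lambda>y. (\<lambda>_. c) (depth par rt y) * h y) x = c * Qop par rt q h x"
    by (rule Q_scale(2)[OF rt d])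
  ultimately show ?thesis using e by (simp add: lambda_harmonic_def)
qed

lemma harm_lincomb:
  assumes rt: "rooted_tree par rt" and fin: "finite I"
    and h: "\<And>k. k \<in> I \<Longrightarrow> lambda_harmonic par rt q lam (G k)"
  shows "lambda_harmonic par rt q lam (\<lambda>x. \<Sum>k\<in>I. c k * G k x)"
proof -
  have hs: "\<And>k. k \<in> I \<Longrightarrow> lambda_harmonic par rt q lam (\<lambda>x. c k * G k x)"
    using harm_scale[OF rt h] by blast
  have "Q_defined par rt q (\<lambda>y. \<Sum>k\<in>I. c k * G k y) \<and>
         (\<forall>x. Qop par rt q (\<lambda>y. \<Sum>k\<in>I. c k * G k y) x = (\<Sum>k\<in>I. Qop par rt q (\<lambda>y. c k * G k y) x))"
    by (rule Q_sum[OF fin]) (use hs in \<open>auto simp: lambda_harmonic_def\<close>)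
  then show ?thesis using hs by (simp add: lambda_harmonic_def sum_distrib_left)
qed

lemma harm_diff:
  assumes rt: "rooted_tree par rt" and a: "lambda_harmonic par rt q lam a"
    and b: "lambda_harmonic par rt q lam b"
  shows "lambda_harmonic par rt q lam (\<lambda>x. a x - b x)"
proof -
  have da: "Q_defined par rt q a" and db: "Q_defined par rt q b"
    using a b by (auto simp: lambda_harmonic_def)
  show ?thesis using Q_diff[OF da db rt] a b by (simp add: lambda_harmonic_def algebra_simps)
qed

lemma exist_choose:
  assumes rt: "rooted_tree par rt" and lam: "lam \<noteq> 0"
  shows "lambda_polyharmonic par rt q lam (Suc m) f \<Longrightarrow>
    \<exists>G. (\<forall>k<Suc m. lambda_harmonic par rt q lam (G k)) \<and>
        (\<forall>x. f x = (\<Sum>k<Suc m. of_nat (depth par rt x choose k) * G k x))"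
proof (induction m arbitrary: f)
  case 0
  then have "Q_defined par rt q f" "\<And>x. Lop par rt q lam f x = 0"
    unfolding lambda_polyharmonic_def by auto
  then have "lambda_harmonic par rt q lam f"
    by (simp add: lambda_harmonic_def Lop_def)
  then show ?case by (intro exI[of _ "\<lambda>_. f"]) simp
next
  case (Suc m)
  let ?L = "Lop par rt q lam"
  define g where "g = ?L f"
  have fp: "\<forall>k<Suc (Suc m). Q_defined par rt q ((?L ^^ k) f)" "\<forall>x. (?L ^^ Suc (Suc m)) f x = 0"
    using Suc.prems unfolding lambda_polyharmonic_def by auto
  have pw: "\<And>k. (?L ^^ k) g = (?L ^^ Suc k) f"
    unfolding g_def by (simp only: funpow_Suc_right o_apply)
  have "lambda_polyharmonic par rt q lam (Suc m) g"
    unfolding lambda_polyharmonic_def pw using fp by auto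
  then obtain G where G: "\<forall>k<Suc m. lambda_harmonic par rt q lam (G k)"
    and gG: "\<forall>x. g x = (\<Sum>k<Suc m. of_nat (depth par rt x choose k) * G k x)"
    using Suc.IH by blast
  define c where "c = - 1 / lam"
  have lc: "lam * c = -1" using lam by (simp add: c_def)
  define F where "F = (\<lambda>x. \<Sum>k<Suc m. (\<lambda>t. of_nat (t choose Suc k) * c) (depth par rt x) * G k x)"
  have GD: "\<And>k. k < Suc m \<Longrightarrow> Q_defined par rt q (G k)"
    and GQ: "\<And>k x. k < Suc m \<Longrightarrow> Qop par rt q (G k) x = lam * G k x"
    using G by (auto simp: lambda_harmonic_def)
  have FQ: "Q_defined par rt q F \<and> (\<forall>x. Qop par rt q F x =
      (\<Sum>k<Suc m. Qop par rt q (\<lambda>y. (\<lambda>t. of_nat (t choose Suc k) * c) (depth par rt y) * G k y) x))"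
    unfolding F_def by (rule Q_sum) (auto intro!: Q_scale(1)[OF rt] GD)
  have FQ2: "Qop par rt q F x = (\<Sum>k<Suc m. of_nat (Suc (depth par rt x) choose Suc k) * c * (lam * G k x))" for x
  proof -
    have "Qop par rt q F x = (\<Sum>k<Suc m. Qop par rt q (\<lambda>y. (\<lambda>t. of_nat (t choose Suc k) * c) (depth par rt y) * G k y) x)"
      using FQ by blast
    also have "\<dots> = (\<Sum>k<Suc m. of_nat (Suc (depth par rt x) choose Suc k) * c * (lam * G k x))"
    proof (rule sum.cong[OF refl])
      fix k assume k: "k \<in> {..<Suc m}"
      show "Qop par rt q (\<lambda>y. (\<lambda>t. of_nat (t choose Suc k) * c) (depth par rt y) * G k y) x
          = of_nat (Suc (depth par rt x) choose Suc k) * c * (lam * G k x)"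
        using Q_scale(2)[OF rt GD[of k], of "\<lambda>t. of_nat (t choose Suc k) * c" x] GQ[of k x] k by simp
    qed
    finally show ?thesis .
  qed
  have LF: "Lop par rt q lam F x = g x" for x
  proof -
    let ?d = "depth par rt x"
    have "Lop par rt q lam F x = (\<Sum>k<Suc m. lam * (of_nat (?d choose Suc k) * c * G k x)
          - of_nat (Suc ?d choose Suc k) * c * (lam * G k x))"
      unfolding Lop_def FQ2 unfolding F_def by (simp only: sum_distrib_left sum_subtractf)
    also have "\<dots> = (\<Sum>k<Suc m. of_nat (?d choose k) * G k x)"
    proof (rule sum.cong[OF refl])
      fix k
      have "lam * (of_nat (?d choose Suc k) * c * G k x) - of_nat (Suc ?d choose Suc k) * c * (lam * G k x)
          = - (lam * c) * of_nat (?d choose k) * G k x"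
        by (simp add: algebra_simps)
      then show "lam * (of_nat (?d choose Suc k) * c * G k x) - of_nat (Suc ?d choose Suc k) * c * (lam * G k x)
          = of_nat (?d choose k) * G k x" using lc by simp
    qed
    finally show ?thesis using gG by simp
  qed
  define H where "H = (\<lambda>x. f x - F x)"
  have fD: "Q_defined par rt q f" using fp(1) by (metis funpow_0 zero_less_Suc)
  have HD: "Q_defined par rt q H" unfolding H_def by (rule Q_diff(1)[OF fD _ rt]) (use FQ in simp)
  have "Qop par rt q H x = lam * H x" for x
  proof -
    have "Qop par rt q H x = Qop par rt q f x - Qop par rt q F x"
      unfolding H_def by (rule Q_diff(2)[OF fD _ rt]) (use FQ in simp)
    moreover have "lam * f x - Qop par rt q f x = g x" by (simp add: g_def Lop_def)
    moreover have "lam * F x - Qop par rt q F x = g x" using LF by (simp add: Lop_def)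
    ultimately show ?thesis by (simp add: H_def algebra_simps)
  qed
  then have Hh: "lambda_harmonic par rt q lam H" using HD by (simp add: lambda_harmonic_def)
  define G' where "G' = case_nat H (\<lambda>k x. c * G k x)"
  show ?case
  proof (intro exI[of _ G'] conjI allI impI)
    fix k assume "k < Suc (Suc m)"
    then show "lambda_harmonic par rt q lam (G' k)"
      using Hh G harm_scale[OF rt] by (cases k) (auto simp: G'_def)
  next
    fix x
    have "(\<Sum>k<Suc (Suc m). of_nat (depth par rt x choose k) * G' k x)
       = H x + F x"
      unfolding sum.lessThan_Suc_shift[of _ "Suc m"] by (simp add: G'_def F_def mult_ac)
    then show "f x = (\<Sum>k<Suc (Suc m). of_nat (depth par rt x choose k) * G' k x)"
      by (simp add: H_def)
  qed
qed



lemma uniq: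
  assumes rt: "rooted_tree par rt" and lam: "lam \<noteq> 0"
    and h: "\<forall>k<n. lambda_harmonic par rt q lam (h k)"
    and h': "\<forall>k<n. lambda_harmonic par rt q lam (h' k)"
    and eq: "\<forall>x. (\<Sum>k<n. of_nat (depth par rt x) ^ k * h k x) = (\<Sum>k<n. of_nat (depth par rt x) ^ k * h' k x)"
  shows "\<forall>k<n. h' k = h k"
proof -
  define e where "e = (\<lambda>k x. h k x - h' k x)"
  have eh: "\<And>k. k < n \<Longrightarrow> lambda_harmonic par rt q lam (e k)"
    unfolding e_def using harm_diff[OF rt] h h' by blast
  have eD: "\<And>k. k < n \<Longrightarrow> Q_defined par rt q (e k)"
    and eQ: "\<And>k x. k < n \<Longrightarrow> Qop par rt q (e k) x = lam * e k x"
    using eh by (auto simp: lambda_harmonic_def)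
  have Z: "\<forall>x. (\<Sum>k<n. of_nat (depth par rt x + m) ^ k * e k x) = 0" for m
  proof (induction m)
    case 0
    show ?case using eq by (simp add: e_def right_diff_distrib sum_subtractf)
  next
    case (Suc m)
    define D where "D = (\<lambda>y. \<Sum>k<n. (\<lambda>t. of_nat (t + m) ^ k) (depth par rt y) * e k y)"
    have D0: "D = (\<lambda>_. 0)" using Suc.IH by (simp add: D_def)
    have DQ: "Q_defined par rt q D \<and> (\<forall>x. Qop par rt q D x =
      (\<Sum>k<n. Qop par rt q (\<lambda>y. (\<lambda>t. of_nat (t + m) ^ k) (depth par rt y) * e k y) x))"
      unfolding D_def by (rule Q_sum) (auto intro!: Q_scale(1)[OF rt] eD)
    show ?case
    proof
      fix x
      have "0 = Qop par rt q D x" unfolding D0 by (simp add: Qop_def)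
      also have "\<dots> = (\<Sum>k<n. Qop par rt q (\<lambda>y. (\<lambda>t. of_nat (t + m) ^ k) (depth par rt y) * e k y) x)"
        using DQ by blast
      also have "\<dots> = (\<Sum>k<n. lam * (of_nat (depth par rt x + Suc m) ^ k * e k x))"
      proof (rule sum.cong[OF refl])
        fix k assume k: "k \<in> {..<n}"
        show "Qop par rt q (\<lambda>y. (\<lambda>t. of_nat (t + m) ^ k) (depth par rt y) * e k y) x
            = lam * (of_nat (depth par rt x + Suc m) ^ k * e k x)"
          using Q_scale(2)[OF rt eD[of k], of "\<lambda>t. of_nat (t + m) ^ k" x] eQ[of k x] k by simp
      qed
      also have "\<dots> = lam * (\<Sum>k<n. of_nat (depth par rt x + Suc m) ^ k * e k x)"
        by (simp add: sum_distrib_left)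
      finally show "(\<Sum>k<n. of_nat (depth par rt x + Suc m) ^ k * e k x) = 0" using lam by simp
    qed
  qed
  show ?thesis
  proof (intro allI impI)
    fix k assume kn: "k < n"
    then obtain N where nN: "n = Suc N" by (cases n) auto
    show "h' k = h k"
    proof
      fix x
      let ?d = "depth par rt x"
      define c where "c = (\<lambda>i. e i x)"
      have sub: "range (\<lambda>m. of_nat (?d + m) :: complex) \<subseteq> {z. (\<Sum>i\<le>N. c i * z ^ i) = 0}"
      proof
        fix z assume "z \<in> range (\<lambda>m. of_nat (?d + m) :: complex)"
        then obtain m where z: "z = of_nat (?d + m)" by auto
        have "(\<Sum>i<n. of_nat (?d + m) ^ i * e i x) = 0" using Z by blast
        then show "z \<in> {z. (\<Sum>i\<le>N. c i * z ^ i) = 0}"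
          unfolding z c_def nN lessThan_Suc_atMost by (simp add: mult.commute)
      qed
      have "inj (\<lambda>m. of_nat (?d + m) :: complex)" by (auto simp: inj_def)
      then have "infinite (range (\<lambda>m. of_nat (?d + m) :: complex))" by (rule range_inj_infinite)
      then have "infinite {z. (\<Sum>i\<le>N. c i * z ^ i) = 0}" using sub finite_subset by blast
      then have "\<not> (\<exists>i. i \<le> N \<and> c i \<noteq> 0)" using polyfun_finite_roots by blast
      then have "c k = 0" using kn nN by auto
      then show "h' k x = h k x" by (simp add: c_def e_def)
    qed
  qed
qed

theorem corollary6p3:
  fixes par :: "'a::countable \<Rightarrow> 'a" and rt :: 'a
    and q :: "'a \<Rightarrow> 'a \<Rightarrow> real" and lam :: complex and n :: nat
    and f :: "'a \<Rightarrow> complex"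
  assumes "rooted_tree par rt"
    and "forward_stochastic par rt q"
    and "lam \<noteq> 0"
    and "n \<ge> 1"
    and "lambda_polyharmonic par rt q lam n f"
  shows "\<exists>h :: nat \<Rightarrow> 'a \<Rightarrow> complex.
           (\<forall>k<n. lambda_harmonic par rt q lam (h k)) \<and>
           (\<forall>x. f x = (\<Sum>k<n. of_nat (depth par rt x) ^ k * h k x)) \<and>
           (\<forall>h' :: nat \<Rightarrow> 'a \<Rightarrow> complex.
              (\<forall>k<n. lambda_harmonic par rt q lam (h' k)) \<and>
              (\<forall>x. f x = (\<Sum>k<n. of_nat (depth par rt x) ^ k * h' k x))
              \<longrightarrow> (\<forall>k<n. h' k = h k))"
proof -
  note rt = assms(1) and lam = assms(3)
  obtain m where nm: "n = Suc m" using assms(4) by (cases n) auto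
  obtain G where G: "\<forall>k<n. lambda_harmonic par rt q lam (G k)"
    and fG: "\<forall>x. f x = (\<Sum>k<n. of_nat (depth par rt x choose k) * G k x)"
    using exist_choose[OF rt lam, where m=m and f=f and q=q] assms(5) nm by blast
  define h where "h = (\<lambda>i x. \<Sum>k\<in>{..<n}. coeff (bp k) i * G k x)"
  have hh: "\<forall>k<n. lambda_harmonic par rt q lam (h k)"
    unfolding h_def using harm_lincomb[OF rt, where I="{..<n}" and G=G and q=q and lam=lam] G by auto
  have fh: "\<forall>x. f x = (\<Sum>k<n. of_nat (depth par rt x) ^ k * h k x)"
  proof
    fix x
    let ?d = "depth par rt x"
    have "f x = (\<Sum>k<n. (\<Sum>i<n. coeff (bp k) i * of_nat ?d ^ i) * G k x)"
      using fG choose_poly[of _ n ?d] by simp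
    also have "\<dots> = (\<Sum>k<n. \<Sum>i<n. of_nat ?d ^ i * (coeff (bp k) i * G k x))"
      by (simp add: sum_distrib_right sum_distrib_left mult_ac)
    also have "\<dots> = (\<Sum>i<n. \<Sum>k<n. of_nat ?d ^ i * (coeff (bp k) i * G k x))"
      by (rule sum.swap)
    also have "\<dots> = (\<Sum>i<n. of_nat ?d ^ i * h i x)"
      by (simp add: h_def sum_distrib_left)
    finally show "f x = (\<Sum>k<n. of_nat (depth par rt x) ^ k * h k x)" .
  qed
  show ?thesis
  proof (intro exI[of _ h] conjI hh fh allI impI)
    fix h' :: "nat \<Rightarrow> 'a \<Rightarrow> complex"
    assume a: "(\<forall>k<n. lambda_harmonic par rt q lam (h' k)) \<and>
              (\<forall>x. f x = (\<Sum>k<n. of_nat (depth par rt x) ^ k * h' k x))"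
    fix k assume k: "k < n"
    have "\<forall>k<n. h' k = h k"
      by (rule uniq[OF rt lam hh]) (use a fh in auto)
    then show "h' k = h k" using k by blast
  qed
qed

end
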